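(* Let $T=(V,E)$ be a tree with $\mathrm{pthin}(T)=2$, and let $\sigma$ be an ordering of $V$ and $S=\{V^0,V^1\}$ a partition of $V$ that are strongly consistent. Let $v_1,v_2,v_3$ be vertices with $v_1<v_2<v_3$ and $\deg(v_2)\ge 4$. Then there is no vertex $w\notin\{v_1,v_3\}$ adjacent to $v_2$ such that both the unique simple path from $v_2$ to $v_1$ and the unique simple path from $v_2$ to $v_3$ pass through $w$.
   Context: For a graph $G=(V,E)$, a linear ordering $<$ of $V$ and a partition of $V$ into classes are called strongly consistent if for every triple $r<s<t$ of vertices with $rt\in E$: if $r$ and $s$ belong to the same class then $st\in E$, and if $s$ and $t$ belong to the same class then $rs\in E$. The proper thinness $\mathrm{pthin}(G)$ is the minimum $k$ such that some ordering and some partition into $k$ classes are strongly consistent. *)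

theory Defs
  imports Main
begin

definition graph :: "'a set \<Rightarrow> ('a \<Rightarrow> 'a \<Rightarrow> bool) \<Rightarrow> bool" where
  "graph V E \<longleftrightarrow> finite V \<and> (\<forall>u v. E u v \<longrightarrow> u \<in> V \<and> v \<in> V)
     \<and> (\<forall>u v. E u v \<longrightarrow> E v u) \<and> (\<forall>v. \<not> E v v)"

definition simple_path :: "('a \<Rightarrow> 'a \<Rightarrow> bool) \<Rightarrow> 'a list \<Rightarrow> 'a \<Rightarrow> 'a \<Rightarrow> bool" where
  "simple_path E p a b \<longleftrightarrow> p \<noteq> [] \<and> hd p = a \<and> last p = b \<and> distinct p
     \<and> (\<forall>i. Suc i < length p \<longrightarrow> E (p ! i) (p ! Suc i))"

definition connected_graph :: "'a set \<Rightarrow> ('a \<Rightarrow> 'a \<Rightarrow> bool) \<Rightarrow> bool" where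
  "connected_graph V E \<longleftrightarrow> (\<forall>a\<in>V. \<forall>b\<in>V. \<exists>p. simple_path E p a b)"

definition is_cycle :: "('a \<Rightarrow> 'a \<Rightarrow> bool) \<Rightarrow> 'a list \<Rightarrow> bool" where
  "is_cycle E c \<longleftrightarrow> length c \<ge> 3 \<and> distinct c
     \<and> (\<forall>i. Suc i < length c \<longrightarrow> E (c ! i) (c ! Suc i)) \<and> E (last c) (hd c)"

definition tree :: "'a set \<Rightarrow> ('a \<Rightarrow> 'a \<Rightarrow> bool) \<Rightarrow> bool" where
  "tree V E \<longleftrightarrow> graph V E \<and> V \<noteq> {} \<and> connected_graph V E \<and> (\<nexists>c. is_cycle E c)"

definition degree :: "'a set \<Rightarrow> ('a \<Rightarrow> 'a \<Rightarrow> bool) \<Rightarrow> 'a \<Rightarrow> nat" where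
  "degree V E v = card {u \<in> V. E v u}"

text \<open>Linear ordering of V given by an injective rank function ord (u < v iff ord u < ord v);
  partition into classes given by a class-labelling function cls.\<close>
definition strongly_consistent ::
  "'a set \<Rightarrow> ('a \<Rightarrow> 'a \<Rightarrow> bool) \<Rightarrow> ('a \<Rightarrow> nat) \<Rightarrow> ('a \<Rightarrow> nat) \<Rightarrow> bool" where
  "strongly_consistent V E ord cls \<longleftrightarrow>
     (\<forall>r\<in>V. \<forall>s\<in>V. \<forall>t\<in>V. ord r < ord s \<and> ord s < ord t \<and> E r t \<longrightarrow>
        (cls r = cls s \<longrightarrow> E s t) \<and> (cls s = cls t \<longrightarrow> E r s))"

definition pthin :: "'a set \<Rightarrow> ('a \<Rightarrow> 'a \<Rightarrow> bool) \<Rightarrow> nat" where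
  "pthin V E = (LEAST k. \<exists>ord cls. inj_on ord V \<and> cls ` V \<subseteq> {..<k}
                          \<and> strongly_consistent V E ord cls)"

end

theory Submission imports Defs begin

lemma nth_notin_drop:
  assumes "distinct P" "i < k" "i < length P"
  shows "P!i \<notin> set (drop k P)"
proof
  assume "P!i \<in> set (drop k P)"
  then obtain m where m: "m < length (drop k P)" "drop k P ! m = P!i" by (metis in_set_conv_nth)
  then have "P!(k+m) = P!i" "k + m < length P" by auto
  then have "k + m = i" using assms nth_eq_iff_index_eq by metis
  then show False using assms by simp
qed

lemma sp_cons_drop:
  assumes "simple_path E P a b" "k < length P" "c \<notin> set (drop k P)" "E c (P!k)"
  shows "simple_path E (c # drop k P) c b"
  unfolding simple_path_def
proof (intro conjI allI impI)
  show "last (c # drop k P) = b" using assms unfolding simple_path_def by (simp add: last_drop)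
  show "distinct (c # drop k P)" using assms unfolding simple_path_def by simp
  fix i assume i: "Suc i < length (c # drop k P)"
  show "E ((c # drop k P) ! i) ((c # drop k P) ! Suc i)"
  proof (cases i)
    case 0 then show ?thesis using assms by simp
  next
    case (Suc i')
    then have "Suc (k + i') < length P" using i by simp
    then have "E (P!(k+i')) (P!Suc (k+i'))" using assms(1) unfolding simple_path_def by blast
    then show ?thesis using Suc assms(2) i by simp
  qed
qed simp_all

lemma tri:
  assumes "tree V E" "E a b" "E b c" "E c a"
  shows False
proof -
  have irr: "\<forall>v. \<not> E v v" using assms(1) unfolding tree_def graph_def by blast
  have "is_cycle E [a,b,c]" unfolding is_cycle_def
  proof (intro conjI allI impI)
    fix i assume "Suc i < length [a,b,c]"
    then have "i = 0 \<or> i = 1" by auto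
    then show "E ([a,b,c] ! i) ([a,b,c] ! Suc i)" using assms by auto
  qed (use assms irr in auto)
  then show False using assms(1) unfolding tree_def by blast
qed

lemma second:
  assumes T: "tree V E" and P: "simple_path E P v b" and w: "w \<in> set P" and E: "E v w"
  shows "1 < length P \<and> P!1 = w"
proof -
  have irr: "\<forall>v. \<not> E v v" and sym: "\<forall>u v. E u v \<longrightarrow> E v u"
    using T unfolding tree_def graph_def by blast+
  obtain j where j: "j < length P" "P!j = w" using w by (metis in_set_conv_nth)
  have P0: "P!0 = v" using P unfolding simple_path_def by (metis hd_conv_nth)
  have "j \<noteq> 0" using j P0 E irr by metis
  moreover have "\<not> 2 \<le> j"
  proof
    assume j2: "2 \<le> j"
    define c where "c = take (Suc j) P"
    have "is_cycle E c" unfolding is_cycle_def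
    proof (intro conjI allI impI)
      show "3 \<le> length c" using j j2 c_def by simp
      show "distinct c" using P c_def unfolding simple_path_def by simp
      fix i assume "Suc i < length c"
      then have "Suc i < length P" "Suc i < Suc j" using c_def j by auto
      then show "E (c ! i) (c ! Suc i)" using P c_def unfolding simple_path_def by simp
    next
      have "last c = w" using c_def j by (simp add: take_Suc_conv_app_nth)
      moreover have "hd c = v" using P c_def unfolding simple_path_def by (cases P) auto
      ultimately show "E (last c) (hd c)" using E sym by simp
    qed
    then show False using T unfolding tree_def by blast
  qed
  ultimately have "j = 1" by simp
  then show ?thesis using j by simp
qed

lemma avoid:
  assumes T: "tree V E" and P: "simple_path E P v b" and P1: "1 < length P" "P!1 = w"
    and hyp: "\<forall>P. simple_path E P v b \<longrightarrow> w \<in> set P"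
    and Eq: "E v q" and qw: "q \<noteq> w"
  shows "q \<notin> set P" and "\<And>u. u \<in> set (tl P) \<Longrightarrow> \<not> E q u"
proof -
  have irr: "\<forall>v. \<not> E v v" and sym: "\<forall>u v. E u v \<longrightarrow> E v u"
    using T unfolding tree_def graph_def by blast+
  have dP: "distinct P" using P unfolding simple_path_def by blast
  have P0: "P!0 = v" using P unfolding simple_path_def by (metis hd_conv_nth)
  have Pne: "P \<noteq> []" using P unfolding simple_path_def by blast
  have wv: "w \<noteq> v" using P0 P1 dP nth_eq_iff_index_eq[OF dP, of 1 0] Pne by simp
  show qn: "q \<notin> set P"
  proof
    assume "q \<in> set P"
    then obtain j where j: "j < length P" "P!j = q" by (metis in_set_conv_nth)
    have "j \<noteq> 0" using j P0 Eq irr by metis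
    moreover have "j \<noteq> 1" using j P1 qw by auto
    ultimately have j2: "2 \<le> j" by simp
    have "v \<notin> set (drop j P)" using nth_notin_drop[OF dP, of 0 j] j j2 P0 Pne by simp
    then have sp: "simple_path E (v # drop j P) v b" using sp_cons_drop[OF P j(1)] Eq j by simp
    have "w \<notin> set (v # drop j P)" using nth_notin_drop[OF dP, of 1 j] j j2 P1 wv by simp
    then show False using hyp sp by blast
  qed
  fix u assume u: "u \<in> set (tl P)"
  show "\<not> E q u"
  proof
    assume Equ: "E q u"
    obtain m where m: "m < length (tl P)" "tl P ! m = u" using u by (metis in_set_conv_nth)
    define k where "k = Suc m"
    have k: "k < length P" "P!k = u" "1 \<le> k" using m k_def Pne by (auto simp: nth_tl)
    show False
    proof (cases "k = 1")
      case True
      have "E v w" using P P0 P1 unfolding simple_path_def by (metis One_nat_def)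
      then show False using tri[OF T, of v w q] assms k Equ sym True by auto
    next
      case False
      then have k2: "2 \<le> k" using k by simp
      have "q \<notin> set (drop k P)" using qn by (meson in_set_dropD)
      then have sq: "simple_path E (q # drop k P) q b" using sp_cons_drop[OF P k(1)] Equ k by simp
      have vn: "v \<notin> set (drop k P)" using nth_notin_drop[OF dP, of 0 k] k P0 Pne by simp
      have "v \<noteq> q" using Eq irr by auto
      then have "v \<notin> set (drop 0 (q # drop k P))" using vn by simp
      then have sp: "simple_path E (v # (q # drop k P)) v b" using sp_cons_drop[OF sq, of 0 v] Eq by simp
      have "w \<notin> set (drop k P)" using nth_notin_drop[OF dP, of 1 k] k k2 P1 by simp
      moreover note wv
      ultimately have "w \<notin> set (v # q # drop k P)" using qw by simp
      then show False using hyp sp by blast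
    qed
  qed
qed


lemma core:
  fixes W :: "'a list"
  assumes sym: "\<And>a b. E a b \<Longrightarrow> E b a"
    and tri: "\<And>a b c. E a b \<Longrightarrow> E b c \<Longrightarrow> E c a \<Longrightarrow> False"
    and inj: "inj_on ord V" and cl: "cls ` V \<subseteq> {0,1}" and sc: "strongly_consistent V E ord cls"
    and Wne: "W \<noteq> []" and Wh: "ord (hd W) < ord v2" and Wl: "ord v2 < ord (last W)"
    and Ws: "successively E W" and WV: "set W \<subseteq> V" and Wv2: "v2 \<notin> set W"
    and nq: "\<forall>u\<in>set W. \<not> E q u"
    and nv1: "\<not> E v2 (hd W)"
    and pV: "p \<in> V" and qV: "q \<in> V" and v2V: "v2 \<in> V" and Ep: "E v2 p" and Eq: "E v2 q"
    and opq: "ord p < ord q" and oqv: "ord q < ord v2"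
  shows False
proof -
  have ed: "\<And>i. Suc i < length W \<Longrightarrow> E (W!i) (W!Suc i)" using Ws successively_nth by metis
  have inV: "\<And>i. i < length W \<Longrightarrow> W!i \<in> V" using WV nth_mem by blast
  have ne: "\<And>i. i < length W \<Longrightarrow> W!i \<noteq> v2" using Wv2 nth_mem by metis
  have nqi: "\<And>i. i < length W \<Longrightarrow> \<not> E q (W!i)" using nq nth_mem by metis
  have SC: "\<And>r s t. r\<in>V \<Longrightarrow> s\<in>V \<Longrightarrow> t\<in>V \<Longrightarrow> ord r < ord s \<Longrightarrow> ord s < ord t \<Longrightarrow> E r t
     \<Longrightarrow> (cls r = cls s \<longrightarrow> E s t) \<and> (cls s = cls t \<longrightarrow> E r s)"
    using sc unfolding strongly_consistent_def by blast
  have two: "\<And>a b c. a\<in>V \<Longrightarrow> b\<in>V \<Longrightarrow> c\<in>V \<Longrightarrow> cls a \<noteq> cls b \<Longrightarrow> cls a \<noteq> cls c \<Longrightarrow> cls b = cls c"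
  proof -
    fix a b c assume "a\<in>V" "b\<in>V" "c\<in>V" "cls a \<noteq> cls b" "cls a \<noteq> cls c"
    then have "cls a \<in> {0,1}" "cls b \<in> {0,1}" "cls c \<in> {0,1}" using cl by auto
    then show "cls b = cls c" using \<open>cls a \<noteq> cls b\<close> \<open>cls a \<noteq> cls c\<close> by auto
  qed
  have ordeq: "\<And>a b. a\<in>V \<Longrightarrow> b\<in>V \<Longrightarrow> ord a = ord b \<Longrightarrow> a = b" using inj inj_on_def by metis
  define k where "k = (LEAST k. k < length W \<and> ord v2 < ord (W!k))"
  have ex: "length W - 1 < length W \<and> ord v2 < ord (W!(length W - 1))"
    using Wne Wl by (simp add: last_conv_nth)
  have k: "k < length W \<and> ord v2 < ord (W!k)" unfolding k_def by (rule LeastI[where P="\<lambda>k. k < length W \<and> ord v2 < ord (W!k)", OF ex])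
  have below: "\<And>j. j < k \<Longrightarrow> ord (W!j) < ord v2"
  proof -
    fix j assume j: "j < k"
    then have "\<not> (j < length W \<and> ord v2 < ord (W!j))" unfolding k_def by (rule not_less_Least)
    moreover have jl: "j < length W" using j k by simp
    ultimately have "ord (W!j) \<le> ord v2" by simp
    moreover have "ord (W!j) \<noteq> ord v2" using ordeq[OF inV[OF jl] v2V] ne[OF jl] by blast
    ultimately show "ord (W!j) < ord v2" by simp
  qed
  have "k \<noteq> 0" using k Wh Wne by (metis hd_conv_nth less_asym)
  then obtain i where i: "k = Suc i" by (metis not0_implies_Suc)
  define x where "x = W!i"
  define y where "y = W!k"
  have il: "i < length W" using k i by simp
  have xV: "x \<in> V" and yV: "y \<in> V" using inV il k x_def y_def by auto
  have Exy: "E x y" using ed[of i] k i x_def y_def by simp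
  have ox: "ord x < ord v2" using below[of i] i x_def by simp
  have oy: "ord v2 < ord y" using k y_def by simp
  have nqx: "\<not> E q x" and nqy: "\<not> E q y" using nqi il k x_def y_def by auto
  have hq: "cls q \<noteq> cls v2"
  proof
    assume "cls q = cls v2"
    then have "E p q" using SC[OF pV qV v2V opq oqv sym[OF Ep]] by blast
    then show False using tri[of p q v2] Eq Ep sym by blast
  qed
  have oqx: "ord q < ord x"
  proof (rule ccontr)
    assume "\<not> ord q < ord x"
    moreover have "ord x \<noteq> ord q" using ordeq[OF xV qV] nqy Exy by blast
    ultimately have "ord x < ord q" by simp
    then have "cls x \<noteq> cls q" "cls q \<noteq> cls y" using SC[OF xV qV yV _ _ Exy] oqv oy nqx nqy sym by auto
    then have "cls x = cls v2" "cls y = cls v2" using two[OF qV xV v2V] two[OF qV yV v2V] hq by auto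
    then have "E v2 y" "E x v2" using SC[OF xV v2V yV ox oy Exy] by auto
    then show False using tri[of x v2 y] sym[OF Exy] by blast
  qed
  have Exv: "E x v2"
  proof -
    have "\<not> (cls x = cls v2)" using SC[OF qV xV v2V oqx ox sym[OF Eq]] nqx by blast
    then have "cls q = cls x" using two[OF v2V qV xV] hq by metis
    then show ?thesis using SC[OF qV xV v2V oqx ox sym[OF Eq]] by blast
  qed
  have "i \<noteq> 0" using Exv nv1 Wne x_def sym by (metis hd_conv_nth)
  then obtain j where j: "i = Suc j" by (metis not0_implies_Suc)
  define z where "z = W!j"
  have jl: "j < length W" using il j by simp
  have zV: "z \<in> V" using inV jl z_def by auto
  have Ezx: "E z x" using ed[of j] il j x_def z_def by simp
  have oz: "ord z < ord v2" using below[of j] i j z_def by simp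
  have nqz: "\<not> E q z" using nqi jl z_def by auto
  have hcqx: "cls q = cls x"
  proof -
    have "\<not> (cls x = cls v2)" using SC[OF qV xV v2V oqx ox sym[OF Eq]] nqx by blast
    then show "cls q = cls x" using two[OF v2V qV xV] hq by metis
  qed
  show False
  proof (cases "ord z < ord q")
    case True
    then have "cls q \<noteq> cls x" using SC[OF zV qV xV True oqx Ezx] nqx nqz sym by blast
    then show False using hcqx by simp
  next
    case False
    moreover have "ord z \<noteq> ord q" using ordeq[OF zV qV] nqx Ezx by blast
    ultimately have oqz: "ord q < ord z" by simp
    have "\<not> E z v2" using tri[of z x v2] Ezx Exv sym by blast
    then have "cls q \<noteq> cls z" "cls z \<noteq> cls v2" using SC[OF qV zV v2V oqz oz sym[OF Eq]] nqz by auto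
    then have "cls q = cls v2" using two[OF zV qV v2V] by metis
    then show False using hq by simp
  qed
qed

lemma succ_V:
  assumes "\<forall>u v. E u v \<longrightarrow> u \<in> V \<and> v \<in> V" "successively E (x # y # xs)"
  shows "set (x # y # xs) \<subseteq> V"
  using assms(2)
proof (induction xs arbitrary: x y)
  case Nil then show ?case using assms(1) by auto
next
  case (Cons z xs)
  then have "set (y # z # xs) \<subseteq> V" "E x y" by auto
  then show ?case using assms(1) by auto
qed

lemma sp_succ: "simple_path E P a b \<Longrightarrow> successively E P"
  unfolding simple_path_def successively_conv_nth by blast

lemma middle:
  assumes T: "tree V E" and inj: "inj_on ord V" and cl: "cls ` V \<subseteq> {0,1}"
    and sc: "strongly_consistent V E ord cls"
    and V1: "v1 \<in> V" and V2: "v2 \<in> V" and V3: "v3 \<in> V"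
    and o1: "ord v1 < ord v2" and o3: "ord v2 < ord v3"
    and w: "w \<notin> {v1,v3}" "E v2 w"
    and h1: "\<forall>P. simple_path E P v2 v1 \<longrightarrow> w \<in> set P"
    and h3: "\<forall>P. simple_path E P v2 v3 \<longrightarrow> w \<in> set P"
    and pV: "p \<in> V" and qV: "q \<in> V" and Ep: "E v2 p" and Eq: "E v2 q" and qw: "q \<noteq> w"
    and opq: "ord p < ord q" and oqv: "ord q < ord v2"
  shows False
proof -
  have irr: "\<forall>v. \<not> E v v" and sym: "\<forall>u v. E u v \<longrightarrow> E v u" and EV: "\<forall>u v. E u v \<longrightarrow> u \<in> V \<and> v \<in> V"
    using T unfolding tree_def graph_def by blast+
  obtain P1 where P1: "simple_path E P1 v2 v1" using T V1 V2 unfolding tree_def connected_graph_def by blast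
  obtain P3 where P3: "simple_path E P3 v2 v3" using T V3 V2 unfolding tree_def connected_graph_def by blast
  have s1: "1 < length P1 \<and> P1!1 = w" using second[OF T P1] h1 P1 w by blast
  have s3: "1 < length P3 \<and> P3!1 = w" using second[OF T P3] h3 P3 w by blast
  have h01: "P1!0 = v2" using P1 unfolding simple_path_def by (metis hd_conv_nth)
  have h03: "P3!0 = v2" using P3 unfolding simple_path_def by (metis hd_conv_nth)
  have "P1 = P1!0 # P1!1 # drop 2 P1" using s1
    by (metis Cons_nth_drop_Suc One_nat_def Suc_1 drop0 less_trans zero_less_one)
  then obtain A1 where A1: "P1 = v2 # w # A1" using s1 h01 by metis
  have "P3 = P3!0 # P3!1 # drop 2 P3" using s3
    by (metis Cons_nth_drop_Suc One_nat_def Suc_1 drop0 less_trans zero_less_one)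
  then obtain B3 where B3: "P3 = v2 # w # B3" using s3 h03 by metis
  have "B3 \<noteq> []" using P3 B3 w unfolding simple_path_def by auto
  then obtain a3 A3 where A3: "P3 = v2 # w # a3 # A3" using B3 by (cases B3) auto
  define W where "W = rev A1 @ w # a3 # A3"
  have W': "W = rev (w # A1) @ (a3 # A3)" unfolding W_def by simp
  have sc1: "successively E (v2 # w # A1)" using sp_succ[OF P1] A1 by simp
  have sc3: "successively E (v2 # w # a3 # A3)" using sp_succ[OF P3] A3 by simp
  have l1: "last (w # A1) = v1" using P1 A1 unfolding simple_path_def by simp
  have l3: "last (a3 # A3) = v3" using P3 A3 unfolding simple_path_def by simp
  have hdW: "hd W = v1"
  proof (cases A1 rule: rev_cases)
    case Nil then show ?thesis using l1 w by simp
  next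
    case (snoc ys y) then show ?thesis using l1 W_def by simp
  qed
  have lW: "last W = v3" using l3 W_def by simp
  have sW: "successively E W" unfolding W' successively_append_iff
  proof (intro conjI)
    have "successively E (w # A1)" using sc1 by simp
    then have "successively (\<lambda>x y. E y x) (w # A1)" by (rule successively_mono) (use sym in blast)
    then show "successively E (rev (w # A1))" by (simp only: successively_rev)
    show "successively E (a3 # A3)" using sc3 by simp
    show "rev (w # A1) = [] \<or> a3 # A3 = [] \<or> E (last (rev (w # A1))) (hd (a3 # A3))" using sc3 by simp
  qed
  have VP1: "set P1 \<subseteq> V" using succ_V[OF EV] sc1 A1 by blast
  have VP3: "set P3 \<subseteq> V" using succ_V[OF EV] sc3 A3 by blast
  have setW: "set W \<subseteq> set (tl P1) \<union> set (tl P3)" unfolding W_def using A1 A3 by auto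
  have WV: "set W \<subseteq> V" using setW VP1 VP3 A1 A3 by auto
  have Wv2: "v2 \<notin> set W" using setW P1 P3 A1 A3 unfolding simple_path_def by auto
  have nq: "\<forall>u\<in>set W. \<not> E q u" using setW avoid(2)[OF T P1 _ _ h1 Eq qw] avoid(2)[OF T P3 _ _ h3 Eq qw] s1 s3 by blast
  have nv1: "\<not> E v2 (hd W)"
  proof
    assume "E v2 (hd W)"
    then have e: "E v2 v1" using hdW by simp
    have "simple_path E [v2, v1] v2 v1" unfolding simple_path_def using e irr
      by (auto simp: less_Suc_eq)
    moreover have "w \<notin> set [v2, v1]" using w irr by auto
    ultimately show False using h1 by blast
  qed
  show False
  proof (rule core[where W=W and p=p and q=q and V=V and E=E and ord=ord and cls=cls])
    show "\<And>a b. E a b \<Longrightarrow> E b a" using sym by blast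
    show "\<And>a b c. E a b \<Longrightarrow> E b c \<Longrightarrow> E c a \<Longrightarrow> False" using tri[OF T] by blast
  qed (use inj cl sc hdW lW o1 o3 sW WV Wv2 nq nv1 pV qV V2 Ep Eq opq oqv W_def in auto)
qed


lemma two_elems:
  assumes "finite S" "2 \<le> card S"
  shows "\<exists>a\<in>S. \<exists>b\<in>S. a \<noteq> b"
proof (rule ccontr)
  assume "\<not> ?thesis"
  then have "card S \<le> Suc 0" using assms(1) card_le_Suc0_iff_eq by blast
  then show False using assms(2) by simp
qed

lemma rev_ord:
  assumes fin: "finite V" and inj: "inj_on ord V" and sc: "strongly_consistent V E ord cls"
    and sym: "\<And>a b. E a b \<Longrightarrow> E b a"
  defines "M \<equiv> Max (ord ` V)"
  shows "\<forall>a\<in>V. \<forall>b\<in>V. (M - ord a < M - ord b) = (ord b < ord a)"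
    and "inj_on (\<lambda>u. M - ord u) V"
    and "strongly_consistent V E (\<lambda>u. M - ord u) cls"
proof -
  have le: "\<And>u. u \<in> V \<Longrightarrow> ord u \<le> M" unfolding M_def using fin by simp
  show lt: "\<forall>a\<in>V. \<forall>b\<in>V. (M - ord a < M - ord b) = (ord b < ord a)"
    using le by (metis diff_less_mono2 le_less_trans less_imp_diff_less not_less_iff_gr_or_eq diff_le_mono2 nat_less_le leD)
  show "inj_on (\<lambda>u. M - ord u) V"
    unfolding inj_on_def using le inj inj_on_def by (metis diff_diff_cancel)
  show "strongly_consistent V E (\<lambda>u. M - ord u) cls"
    unfolding strongly_consistent_def
  proof (intro ballI impI)
    fix r s t assume V: "r \<in> V" "s \<in> V" "t \<in> V"
      and h: "M - ord r < M - ord s \<and> M - ord s < M - ord t \<and> E r t"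
    then have "ord t < ord s" "ord s < ord r" "E t r" using lt sym by auto
    then have "(cls t = cls s \<longrightarrow> E s r) \<and> (cls s = cls r \<longrightarrow> E t s)"
      using sc V unfolding strongly_consistent_def by blast
    then show "(cls r = cls s \<longrightarrow> E s t) \<and> (cls s = cls t \<longrightarrow> E r s)" using sym by metis
  qed
qed

theorem propositionA6:
  fixes V :: "'a set" and E :: "'a \<Rightarrow> 'a \<Rightarrow> bool"
    and ord :: "'a \<Rightarrow> nat" and cls :: "'a \<Rightarrow> nat" and v1 v2 v3 :: 'a
  assumes "tree V E"
    and "pthin V E = 2"
    and "inj_on ord V"
    and "cls ` V \<subseteq> {0, 1}"
    and "strongly_consistent V E ord cls"
    and "v1 \<in> V" "v2 \<in> V" "v3 \<in> V"
    and "ord v1 < ord v2" "ord v2 < ord v3"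
    and "degree V E v2 \<ge> 4"
  shows "\<not> (\<exists>w\<in>V. w \<notin> {v1, v3} \<and> E v2 w
              \<and> (\<forall>p. simple_path E p v2 v1 \<longrightarrow> w \<in> set p)
              \<and> (\<forall>p. simple_path E p v2 v3 \<longrightarrow> w \<in> set p))"
proof
  assume "\<exists>w\<in>V. w \<notin> {v1, v3} \<and> E v2 w
              \<and> (\<forall>p. simple_path E p v2 v1 \<longrightarrow> w \<in> set p)
              \<and> (\<forall>p. simple_path E p v2 v3 \<longrightarrow> w \<in> set p)"
  then obtain w where wV: "w \<in> V" and w: "w \<notin> {v1, v3}" "E v2 w"
    and h1: "\<forall>p. simple_path E p v2 v1 \<longrightarrow> w \<in> set p"
    and h3: "\<forall>p. simple_path E p v2 v3 \<longrightarrow> w \<in> set p" by blast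
  have T: "tree V E" using assms by simp
  have irr: "\<forall>v. \<not> E v v" and sym: "\<And>u v. E u v \<Longrightarrow> E v u" and fin: "finite V"
    using T unfolding tree_def graph_def by blast+
  define N where "N = {u \<in> V. E v2 u} - {w}"
  have finN: "finite N" using fin N_def by simp
  have "card N \<ge> 3" using assms(11) wV w unfolding N_def degree_def
    by (simp add: card_Diff_singleton fin)
  define Lf where "Lf = {u \<in> N. ord u < ord v2}"
  define Rt where "Rt = {u \<in> N. ord v2 < ord u}"
  have "N \<subseteq> Lf \<union> Rt"
  proof
    fix u assume u: "u \<in> N"
    then have "u \<in> V" "u \<noteq> v2" using irr N_def by auto
    then have "ord u \<noteq> ord v2" using assms(3,7) inj_on_def by metis
    then show "u \<in> Lf \<union> Rt" using u Lf_def Rt_def by auto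
  qed
  then have "card N \<le> card Lf + card Rt"
    by (metis card_Un_le card_mono finN finite_Un Lf_def Rt_def finite_subset mem_Collect_eq subsetI order_trans)
  then have "2 \<le> card Lf \<or> 2 \<le> card Rt" using \<open>card N \<ge> 3\<close> by linarith
  then show False
  proof
    assume "2 \<le> card Lf"
    then obtain a b where ab: "a \<in> Lf" "b \<in> Lf" "a \<noteq> b" using two_elems[of Lf] finN Lf_def by auto
    then have "ord a \<noteq> ord b" using assms(3) Lf_def N_def inj_on_def by (metis (no_types, lifting) DiffD1 mem_Collect_eq)
    then obtain p q where pq: "p \<in> Lf" "q \<in> Lf" "ord p < ord q" using ab by (metis nat_neq_iff)
    show False
      by (rule middle[OF T assms(3,4,5,6,7,8,9,10) w h1 h3, of p q])
        (use pq Lf_def N_def in auto)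
  next
    assume "2 \<le> card Rt"
    then obtain a b where ab: "a \<in> Rt" "b \<in> Rt" "a \<noteq> b" using two_elems[of Rt] finN Rt_def by auto
    then have "ord a \<noteq> ord b" using assms(3) Rt_def N_def inj_on_def by (metis (no_types, lifting) DiffD1 mem_Collect_eq)
    then obtain p q where pq: "p \<in> Rt" "q \<in> Rt" "ord q < ord p" using ab by (metis nat_neq_iff)
    define M where "M = Max (ord ` V)"
    note R = rev_ord[OF fin assms(3,5) sym, folded M_def]
    have w': "w \<notin> {v3, v1}" using w by auto
    have pqV: "p \<in> V" "q \<in> V" using pq Rt_def N_def by auto
    show False
      by (rule middle[OF T R(2) assms(4) R(3) assms(8,7,6) _ _ w'(1) w(2) h3 h1, of p q])
        (use pq Rt_def N_def R(1) assms(6,7,8,9,10) pqV in auto)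
  qed
qed

end
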